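(* Let $A$ be a synaptic algebra and let $p,q\in P$ be in generic position ($p\wedge q=p\wedge q^{\perp}=p^{\perp}\wedge q=p^{\perp}\wedge q^{\perp}=0$). Let $c:=(pqp+p^{\perp}q^{\perp}p^{\perp})^{1/2}$, $s:=(pq^{\perp}p+p^{\perp}qp^{\perp})^{1/2}$, let $u$ be the symmetry of the polar decomposition of $p-q^{\perp}$ (so $p-q^{\perp}=cu=uc$) and $v$ the symmetry of the polar decomposition of $p-q$ (so $p-q=sv=vs$), and put $j:=uvp+pvu$ and $\ell:=2p-1$. Then: (i) $j$ is a symmetry in $A$ exchanging $p$ and $p^{\perp}$, i.e. $jpj=p^{\perp}$; (ii) $j$ commutes with both $s$ and $c$; (iii) $j=pj+jp$; (iv) $\ell=2p-1=p-p^{\perp}=cu+sv$ is a symmetry that commutes with $p$, $c$ and $s$.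
   Context: Synaptic algebra (Foulis): $R$ is a real linear associative algebra with unit $1$, and $A\subseteq R$ is a real linear subspace with $1\in A$. For $a,b\in A$ write $aCb$ iff $ab=ba$; $C(a):=\{b\in A: aCb\}$; $CC(a):=\{b\in A: bCd \text{ for all } d\in C(a)\}$. $A$ is a synaptic algebra with enveloping algebra $R$ iff: (SA1) $A$ is a partially ordered archimedean real linear space with positive cone $A^+$, $1$ is an order unit, $\|\cdot\|$ the order-unit norm; (SA2) $a\in A\Rightarrow a^2\in A^+$; (SA3) $a,b\in A^+\Rightarrow aba\in A^+$; (SA4) if $a\in A$, $b\in A^+$, $aba=0$ then $ab=ba=0$; (SA5) if $a\in A^+$ there is $b\in A^+\cap CC(a)$ with $b^2=a$; (SA6) for $a\in A$ there is $p=p^2\in A$ with $ab=0\Leftrightarrow pb=0$ for all $b\in A$; (SA7) if $1\le a$ there is $b\in A$ with $ab=ba=1$; (SA8) if $a,b\in A$, $a_1\le a_2\le\cdots$ are pairwise commuting elements of $C(b)$ with $\|a-a_n\|\to0$, then $a\in C(b)$. $A$ is nondegenerate ($1\neq0$). Products are computed in $R$. $P:=\{p\in A:p=p^2\}$ with inherited order is an orthomodular lattice with $p^{\perp}:=1-p$, meet $\wedge$, join $\vee$. For $0\le a$, $a^{1/2}$ is its unique positive square root in $A$, $|a|:=(a^2)^{1/2}$; $a^{\circ}$ is the carrier of $a$ (the unique projection with $ab=0\Leftrightarrow a^{\circ}b=0$ for all $b\in A$). A symmetry is $u\in A$ with $u^2=1$. For $a\in A$, the signum $t$ of $a$ is the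 partial symmetry with $t^2=a^{\circ}$, $t\in CC(a)$, $a=|a|t=t|a|$; the symmetry of the polar decomposition of $a$ is $t+(a^{\circ})^{\perp}$, a symmetry in $CC(a)$ with $a=|a|u=u|a|$. A symmetry $w$ exchanges projections $x,y$ iff $wxw=y$. *)

theory Defs
  imports Main "HOL.Real_Vector_Spaces"
begin

text \<open>The enveloping algebra R is the type 'a (a real associative algebra with unit);
  A is a subset of it and K is the positive cone of A.\<close>

definition sa_le :: "'a::real_algebra_1 set \<Rightarrow> 'a \<Rightarrow> 'a \<Rightarrow> bool" where
  "sa_le K a b \<longleftrightarrow> b - a \<in> K"

definition onorm :: "'a::real_algebra_1 set \<Rightarrow> 'a \<Rightarrow> real" where
  "onorm K a = Inf {l::real. 0 \<le> l \<and> sa_le K (- (l *\<^sub>R 1)) a \<and> sa_le K a (l *\<^sub>R 1)}"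

definition Comm :: "'a::real_algebra_1 set \<Rightarrow> 'a \<Rightarrow> 'a set" where
  "Comm A a = {b \<in> A. a * b = b * a}"

definition CComm :: "'a::real_algebra_1 set \<Rightarrow> 'a \<Rightarrow> 'a set" where
  "CComm A a = {b \<in> A. \<forall>d \<in> Comm A a. b * d = d * b}"

definition synaptic_algebra :: "'a::real_algebra_1 set \<Rightarrow> 'a set \<Rightarrow> bool" where
  "synaptic_algebra A K \<longleftrightarrow>
     \<comment> \<open>A is a real linear subspace containing 1; nondegenerate\<close>
     (0::'a) \<in> A \<and> 1 \<in> A \<and> (\<forall>a\<in>A. \<forall>b\<in>A. a + b \<in> A) \<and> (\<forall>r::real. \<forall>a\<in>A. r *\<^sub>R a \<in> A)
     \<and> (1::'a) \<noteq> 0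
     \<comment> \<open>SA1: partially ordered (positive cone K), archimedean, 1 an order unit\<close>
     \<and> K \<subseteq> A \<and> (\<forall>a\<in>K. \<forall>b\<in>K. a + b \<in> K) \<and> (\<forall>r::real. \<forall>a\<in>K. 0 \<le> r \<longrightarrow> r *\<^sub>R a \<in> K)
     \<and> (\<forall>a\<in>K. -a \<in> K \<longrightarrow> a = 0)
     \<and> (\<forall>a\<in>A. \<forall>b\<in>A. (\<forall>n::nat. sa_le K (real n *\<^sub>R a) b) \<longrightarrow> sa_le K a 0)
     \<and> (\<forall>a\<in>A. \<exists>n::nat. sa_le K a (real n *\<^sub>R 1))
     \<comment> \<open>SA2\<close>
     \<and> (\<forall>a\<in>A. a * a \<in> K)
     \<comment> \<open>SA3\<close>
     \<and> (\<forall>a\<in>K. \<forall>b\<in>K. a * b * a \<in> K)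
     \<comment> \<open>SA4\<close>
     \<and> (\<forall>a\<in>A. \<forall>b\<in>K. a * b * a = 0 \<longrightarrow> a * b = 0 \<and> b * a = 0)
     \<comment> \<open>SA5\<close>
     \<and> (\<forall>a\<in>K. \<exists>b\<in>K \<inter> CComm A a. b * b = a)
     \<comment> \<open>SA6\<close>
     \<and> (\<forall>a\<in>A. \<exists>p\<in>A. p * p = p \<and> (\<forall>b\<in>A. a * b = 0 \<longleftrightarrow> p * b = 0))
     \<comment> \<open>SA7\<close>
     \<and> (\<forall>a\<in>A. sa_le K 1 a \<longrightarrow> (\<exists>b\<in>A. a * b = 1 \<and> b * a = 1))
     \<comment> \<open>SA8\<close>
     \<and> (\<forall>a\<in>A. \<forall>b\<in>A. \<forall>f::nat \<Rightarrow> 'a.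
           (\<forall>n. f n \<in> Comm A b) \<and> (\<forall>n. sa_le K (f n) (f (Suc n)))
           \<and> (\<forall>m n. f m * f n = f n * f m)
           \<and> (\<lambda>n. onorm K (a - f n)) \<longlonglongrightarrow> 0
           \<longrightarrow> a \<in> Comm A b)"

definition Proj :: "'a::real_algebra_1 set \<Rightarrow> 'a set" where
  "Proj A = {p \<in> A. p * p = p}"

definition pcomp :: "'a::real_algebra_1 \<Rightarrow> 'a" where
  "pcomp p = 1 - p"

definition pmeet :: "'a::real_algebra_1 set \<Rightarrow> 'a set \<Rightarrow> 'a \<Rightarrow> 'a \<Rightarrow> 'a" where
  "pmeet A K p q = (THE r. r \<in> Proj A \<and> sa_le K r p \<and> sa_le K r q
      \<and> (\<forall>x\<in>Proj A. sa_le K x p \<and> sa_le K x q \<longrightarrow> sa_le K x r))"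

definition generic_position :: "'a::real_algebra_1 set \<Rightarrow> 'a set \<Rightarrow> 'a \<Rightarrow> 'a \<Rightarrow> bool" where
  "generic_position A K p q \<longleftrightarrow>
     pmeet A K p q = 0 \<and> pmeet A K p (pcomp q) = 0 \<and>
     pmeet A K (pcomp p) q = 0 \<and> pmeet A K (pcomp p) (pcomp q) = 0"

definition sa_sqrt :: "'a::real_algebra_1 set \<Rightarrow> 'a \<Rightarrow> 'a" where
  "sa_sqrt K a = (THE b. b \<in> K \<and> b * b = a)"

definition sa_abs :: "'a::real_algebra_1 set \<Rightarrow> 'a \<Rightarrow> 'a" where
  "sa_abs K a = sa_sqrt K (a * a)"

definition carrier_proj :: "'a::real_algebra_1 set \<Rightarrow> 'a \<Rightarrow> 'a" where
  "carrier_proj A a = (THE p. p \<in> Proj A \<and> (\<forall>b\<in>A. a * b = 0 \<longleftrightarrow> p * b = 0))"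

definition signum :: "'a::real_algebra_1 set \<Rightarrow> 'a set \<Rightarrow> 'a \<Rightarrow> 'a" where
  "signum A K a = (THE t. t \<in> A \<and> t * t = carrier_proj A a \<and> t \<in> CComm A a
       \<and> a = sa_abs K a * t \<and> a = t * sa_abs K a)"

definition polar_sym :: "'a::real_algebra_1 set \<Rightarrow> 'a set \<Rightarrow> 'a \<Rightarrow> 'a" where
  "polar_sym A K a = signum A K a + pcomp (carrier_proj A a)"

definition symmetry :: "'a::real_algebra_1 set \<Rightarrow> 'a \<Rightarrow> bool" where
  "symmetry A u \<longleftrightarrow> u \<in> A \<and> u * u = 1"

end

theory Submission
  imports Defs
begin

locale SA = fixes A K :: "'a::real_algebra_1 set"
  assumes sa: "synaptic_algebra A K"
begin

lemma P1: "0 \<in> A"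
  using sa unfolding synaptic_algebra_def by (elim conjE) assumption
lemma P2: "1 \<in> A"
  using sa unfolding synaptic_algebra_def by (elim conjE) assumption
lemma P3: "\<forall>a\<in>A. \<forall>b\<in>A. a + b \<in> A"
  using sa unfolding synaptic_algebra_def by (elim conjE) assumption
lemma P4: "\<forall>r::real. \<forall>a\<in>A. r *\<^sub>R a \<in> A"
  using sa unfolding synaptic_algebra_def by (elim conjE) assumption
lemma P5: "(1::'a) \<noteq> 0"
  using sa unfolding synaptic_algebra_def by (elim conjE) assumption
lemma P6: "K \<subseteq> A"
  using sa unfolding synaptic_algebra_def by (elim conjE) assumption
lemma P7: "\<forall>a\<in>K. \<forall>b\<in>K. a + b \<in> K"
  using sa unfolding synaptic_algebra_def by (elim conjE) assumption
lemma P9: "\<forall>a\<in>K. -a \<in> K \<longrightarrow> a = 0"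
  using sa unfolding synaptic_algebra_def by (elim conjE) assumption
lemma P12: "\<forall>a\<in>A. a * a \<in> K"
  using sa unfolding synaptic_algebra_def by (elim conjE) assumption
lemma P13: "\<forall>a\<in>K. \<forall>b\<in>K. a * b * a \<in> K"
  using sa unfolding synaptic_algebra_def by (elim conjE) assumption
lemma P14: "\<forall>a\<in>A. \<forall>b\<in>K. a * b * a = 0 \<longrightarrow> a * b = 0 \<and> b * a = 0"
  using sa unfolding synaptic_algebra_def by (elim conjE) assumption
lemma P15: "\<forall>a\<in>K. \<exists>b\<in>K \<inter> CComm A a. b * b = a"
  using sa unfolding synaptic_algebra_def by (elim conjE) assumption
lemma P16: "\<forall>a\<in>A. \<exists>p\<in>A. p * p = p \<and> (\<forall>b\<in>A. a * b = 0 \<longleftrightarrow> p * b = 0)"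
  using sa unfolding synaptic_algebra_def by (elim conjE) assumption

lemma A0: "0 \<in> A" and A1: "1 \<in> A" and nondeg: "(1::'a) \<noteq> 0" and KA: "K \<subseteq> A"
  using P1 P2 P5 P6 by auto
lemma Aadd: "a \<in> A \<Longrightarrow> b \<in> A \<Longrightarrow> a + b \<in> A" using P3 by blast
lemma Ascale: "a \<in> A \<Longrightarrow> r *\<^sub>R a \<in> A" using P4 by blast
lemma Kanti: "a \<in> K \<Longrightarrow> -a \<in> K \<Longrightarrow> a = 0" using P9 by blast
lemma Kadd: "a \<in> K \<Longrightarrow> b \<in> K \<Longrightarrow> a + b \<in> K" using P7 by blast
lemma Asq: "a \<in> A \<Longrightarrow> a * a \<in> K" using P12 by blast
lemma SA3: "a \<in> K \<Longrightarrow> b \<in> K \<Longrightarrow> a * b * a \<in> K" using P13 by blast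
lemma SA4: "a \<in> A \<Longrightarrow> b \<in> K \<Longrightarrow> a * b * a = 0 \<Longrightarrow> a * b = 0 \<and> b * a = 0" using P14 by blast
lemma SA5: "a \<in> K \<Longrightarrow> \<exists>b\<in>K \<inter> CComm A a. b * b = a" using P15 by blast
lemma SA6: "a \<in> A \<Longrightarrow> \<exists>p\<in>A. p * p = p \<and> (\<forall>b\<in>A. a * b = 0 \<longleftrightarrow> p * b = 0)" using P16 by blast

lemma KA': "a \<in> K \<Longrightarrow> a \<in> A" using KA by blast
lemma Aneg: "a \<in> A \<Longrightarrow> - a \<in> A"
  by (metis Ascale scaleR_minus1_left)
lemma Adiff: "a \<in> A \<Longrightarrow> b \<in> A \<Longrightarrow> a - b \<in> A"
  by (metis Aadd Aneg diff_conv_add_uminus)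
lemma Asq': "a \<in> A \<Longrightarrow> a * a \<in> A" using Asq KA' by blast
lemma K1: "1 \<in> K" using Asq[OF A1] by simp

lemma jordan: assumes "a \<in> A" "b \<in> A" shows "a * b + b * a \<in> A"
proof -
  have "a * b + b * a = (a + b) * (a + b) - a * a - b * b" by (simp add: algebra_simps)
  thus ?thesis using assms by (metis Aadd Adiff Asq')
qed

lemma half2: "(x::'a) = (1/2::real) *\<^sub>R (x + x)"
  by (simp add: scaleR_2[symmetric])

lemma Acomm: assumes "a \<in> A" "b \<in> A" "a * b = b * a" shows "a * b \<in> A"
proof -
  have "a * b = (1/2::real) *\<^sub>R (a * b + a * b)" by (rule half2)
  also have "\<dots> = (1/2::real) *\<^sub>R (a * b + b * a)" by (simp only: assms(3))
  finally have f: "a * b = (1/2::real) *\<^sub>R (a * b + b * a)" .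
  show ?thesis by (subst f) (rule Ascale[OF jordan[OF assms(1,2)]])
qed

lemma triple: assumes "a \<in> A" "b \<in> A" shows "a * b * a \<in> A"
proof -
  have e: "a * b * a + a * b * a = ((a*b+b*a)*a + a*(a*b+b*a)) - ((a*a)*b + b*(a*a))"
    by (simp add: algebra_simps)
  have "a * b * a = (1/2::real) *\<^sub>R (a * b * a + a * b * a)" by (rule half2)
  also have "\<dots> = (1/2::real) *\<^sub>R (((a*b+b*a)*a + a*(a*b+b*a)) - ((a*a)*b + b*(a*a)))" by (simp only: e)
  finally have f: "a * b * a = (1/2::real) *\<^sub>R (((a*b+b*a)*a + a*(a*b+b*a)) - ((a*a)*b + b*(a*a)))" .
  have "((a*b+b*a)*a + a*(a*b+b*a)) - ((a*a)*b + b*(a*a)) \<in> A"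
    using assms by (intro Adiff jordan Asq') 
  thus ?thesis by (subst f) (rule Ascale)
qed

lemma nil: assumes "d \<in> A" "d * d = 0" shows "d = 0"
  using SA4[OF assms(1) K1] assms(2) by simp

lemma transp: assumes "a \<in> A" "x \<in> A" "a * x = 0" shows "x * a = 0"
proof -
  have "x * a = x * a + a * x" using assms by simp
  hence "x * a \<in> A" using jordan[OF assms(2,1)] by simp
  moreover have "(x * a) * (x * a) = x * (a * x) * a" by (simp add: mult.assoc)
  ultimately show ?thesis using nil assms(3) by simp
qed

lemma sqrt_unique0:
  assumes x: "x \<in> K" and b0: "b0 \<in> K" "b0 \<in> CComm A x" "b0 * b0 = x"
    and b: "b \<in> K" "b * b = x"
  shows "b = b0"
proof -
  have bA: "b \<in> A" and b0A: "b0 \<in> A" using b b0 KA by auto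
  have "b \<in> Comm A x" using bA b by (auto simp: Comm_def mult.assoc)
  hence cb: "b0 * b = b * b0" using b0 by (auto simp: CComm_def)
  define d where "d = b - b0"
  have dA: "d \<in> A" using bA b0A by (simp add: d_def Adiff)
  have posb: "d * y * d \<in> K" if y: "y \<in> K" "y * b0 = b0 * y" "y * b = b * y" for y
  proof -
    obtain r where r: "r \<in> K" "r \<in> CComm A y" "r * r = y" using SA5[OF y(1)] by blast
    have "d \<in> Comm A y" using dA y(2,3) by (auto simp: Comm_def d_def algebra_simps)
    hence rd: "r * d = d * r" using r by (auto simp: CComm_def)
    have "d * y * d = r * (d * d) * r"
      using rd r(3) by (metis mult.assoc)
    thus ?thesis using SA3[OF r(1) Asq[OF dA]] by simp
  qed
  have p1: "d * b * d \<in> K" using posb[of b] b cb by simp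
  have p2: "d * b0 * d \<in> K" using posb[of b0] b0 cb by simp
  have "d * b * d + d * b0 * d = (b*b - b0*b0 + (b*b0 - b0*b)) * d"
    by (simp add: d_def algebra_simps)
  also have "\<dots> = 0" using b b0 cb by simp
  finally have "d * b * d = - (d * b0 * d)" by (simp add: eq_neg_iff_add_eq_0)
  hence z1: "d * b * d = 0" using Kanti p1 p2 by simp
  hence z2: "d * b0 * d = 0" using \<open>d * b * d = - (d * b0 * d)\<close> by simp
  have "d * b = 0" using SA4[OF dA b(1) z1] by simp
  moreover have "d * b0 = 0" using SA4[OF dA b0(1) z2] by simp
  ultimately have "d * d = 0" by (simp add: d_def algebra_simps)
  hence "d = 0" using nil[OF dA] by blast
  thus ?thesis unfolding d_def by (metis right_minus_eq)
qed

lemma sqrt_props: assumes "x \<in> K"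
  shows "sa_sqrt K x \<in> K \<and> sa_sqrt K x * sa_sqrt K x = x \<and> sa_sqrt K x \<in> CComm A x"
proof -
  obtain b0 where b0: "b0 \<in> K" "b0 \<in> CComm A x" "b0 * b0 = x" using SA5[OF assms] by blast
  have "sa_sqrt K x = b0" unfolding sa_sqrt_def
  proof (rule the_equality)
    show "b0 \<in> K \<and> b0 * b0 = x" using b0 by simp
    fix b assume "b \<in> K \<and> b * b = x"
    thus "b = b0" using sqrt_unique0[OF assms b0] by blast
  qed
  thus ?thesis using b0 by simp
qed

lemma CComm_comm: "r \<in> CComm A x \<Longrightarrow> d \<in> A \<Longrightarrow> d * x = x * d \<Longrightarrow> r * d = d * r"
  by (auto simp: CComm_def Comm_def)

lemma carrier_unique: assumes "e \<in> Proj A" "e' \<in> Proj A"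
  "\<forall>y\<in>A. e * y = 0 \<longleftrightarrow> e' * y = 0" shows "e = e'"
proof -
  have eA: "e \<in> A" "e * e = e" "e' \<in> A" "e' * e' = e'" using assms(1,2) by (auto simp: Proj_def)
  have m1: "1 - e \<in> A" "1 - e' \<in> A" using eA A1 Adiff by auto
  have "e * (1 - e) = 0" using eA by (simp add: algebra_simps)
  hence 1: "e' * (1 - e) = 0" using assms(3) m1(1) by blast
  have "e' * (1 - e') = 0" using eA by (simp add: algebra_simps)
  hence 2: "e * (1 - e') = 0" using assms(3) m1(2) by blast
  have "(e - e') * (e - e') = e*e - e*e' - e'*e + e'*e'" by (simp add: algebra_simps)
  also have "\<dots> = 0" using 1 2 eA by (simp add: algebra_simps)
  finally have "e - e' = 0" using nil[OF Adiff[OF eA(1,3)]] by blast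
  thus ?thesis by (metis right_minus_eq)
qed

lemma carrier_props: assumes "a \<in> A"
  shows "carrier_proj A a \<in> Proj A \<and> (\<forall>y\<in>A. a * y = 0 \<longleftrightarrow> carrier_proj A a * y = 0)"
proof -
  obtain e where e: "e \<in> A" "e * e = e" "\<forall>b\<in>A. a * b = 0 \<longleftrightarrow> e * b = 0" using SA6[OF assms] by blast
  have "carrier_proj A a = e" unfolding carrier_proj_def
  proof (rule the_equality)
    show "e \<in> Proj A \<and> (\<forall>b\<in>A. a * b = 0 \<longleftrightarrow> e * b = 0)" using e by (simp add: Proj_def)
    fix p assume p: "p \<in> Proj A \<and> (\<forall>b\<in>A. a * b = 0 \<longleftrightarrow> p * b = 0)"
    have pe: "p \<in> Proj A" "e \<in> Proj A" using p e(1,2) by (auto simp: Proj_def)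
    have "\<forall>y\<in>A. p * y = 0 \<longleftrightarrow> e * y = 0" using p e(3) by blast
    thus "p = e" by (rule carrier_unique[OF pe])
  qed
  thus ?thesis using e(1,2,3) by (simp add: Proj_def)
qed

end

context SA begin

lemma ProjD: "e \<in> Proj A \<Longrightarrow> e \<in> A \<and> e * e = e" by (simp add: Proj_def)
lemma ProjK: "e \<in> Proj A \<Longrightarrow> e \<in> K" using Asq by (metis ProjD)
lemma Proj_comp: assumes "e \<in> Proj A" shows "1 - e \<in> Proj A"
proof -
  have "(1 - e) * (1 - e) = 1 - e" using ProjD[OF assms] by (simp add: algebra_simps)
  thus ?thesis using ProjD[OF assms] A1 Adiff by (simp add: Proj_def)
qed

lemma proj_le_mult: assumes e: "e \<in> Proj A" and f: "f \<in> Proj A" and le: "sa_le K e f"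
  shows "f * e = e \<and> e * f = e"
proof -
  have eA: "e \<in> A" "e * e = e" "f \<in> A" "f * f = f" using e f ProjD by auto
  define x where "x = 1 - f"
  have xK: "x \<in> K" using ProjK[OF Proj_comp[OF f]] by (simp add: x_def)
  have xA: "x \<in> A" using xK KA by auto
  have fe: "f - e \<in> K" using le by (simp add: sa_le_def)
  have xf: "x * f = 0" "f * x = 0" using eA by (simp_all add: x_def algebra_simps)
  have "x * (f - e) * x = - (x * e * x)" using xf by (simp add: algebra_simps)
  moreover have "x * (f - e) * x \<in> K" using SA3[OF xK fe] .
  moreover have "x * e * x \<in> K" using SA3[OF xK ProjK[OF e]] .
  ultimately have "x * e * x = 0" using Kanti by metis
  hence "x * e = 0 \<and> e * x = 0" using SA4[OF xA ProjK[OF e]] by blast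
  thus ?thesis by (simp add: x_def algebra_simps)
qed

lemma proj_mult_le: assumes e: "e \<in> Proj A" and f: "f \<in> Proj A" and fe: "f * e = e"
  shows "sa_le K e f \<and> e * f = e"
proof -
  have eA: "e \<in> A" "e * e = e" "f \<in> A" "f * f = f" using e f ProjD by auto
  define x where "x = 1 - f"
  have xA: "x \<in> A" using ProjD[OF Proj_comp[OF f]] by (simp add: x_def)
  have "x * e = 0" using fe by (simp add: x_def algebra_simps)
  hence "x * e * x = 0" by simp
  hence "e * x = 0" using SA4[OF xA ProjK[OF e]] by blast
  hence ef: "e * f = e" by (simp add: x_def algebra_simps)
  have "f - e = (f - e) * (f - e)" using eA fe ef by (simp add: algebra_simps)
  hence "f - e \<in> K" using Asq Adiff eA by metis
  thus ?thesis using ef by (simp add: sa_le_def)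
qed

lemma meet_zero:
  assumes p: "p \<in> Proj A" and f: "f \<in> Proj A" and m: "pmeet A K p f = 0"
    and y: "y \<in> A" and zy: "((1 - p) + (1 - f)) * y = 0"
  shows "y = 0"
proof -
  define z where "z = (1 - p) + (1 - f)"
  have pK: "1 - p \<in> K" and fK: "1 - f \<in> K" using ProjK Proj_comp p f by auto
  have zA: "z \<in> A" using pK fK KA Aadd by (auto simp: z_def)
  obtain e where eA: "e \<in> A" "e * e = e" and ez: "\<forall>b\<in>A. z * b = 0 \<longleftrightarrow> e * b = 0"
    using SA6[OF zA] by blast
  have eP: "e \<in> Proj A" using eA by (simp add: Proj_def)
  define r where "r = 1 - e"
  have rP: "r \<in> Proj A" using Proj_comp[OF eP] by (simp add: r_def)
  have rA: "r \<in> A" and rK: "r \<in> K" using rP ProjD ProjK by auto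
  have "e * r = 0" using eA by (simp add: r_def algebra_simps)
  hence zr: "z * r = 0" using ez rA by blast
  have lower: "sa_le K r g" if g: "g \<in> Proj A" and gz: "z = (1 - g) + h" and hK: "h \<in> K" for g h
  proof -
    have gK: "1 - g \<in> K" using ProjK Proj_comp g by auto
    have "r * z * r = r * ((1 - g) + h) * r" by (simp only: gz)
    also have "\<dots> = r * (1 - g) * r + r * h * r" by (simp add: algebra_simps)
    finally have "r * z * r = r * (1 - g) * r + r * h * r" .
    hence "r * (1 - g) * r + r * h * r = 0" using zr by (metis mult_zero_left mult_zero_right mult.assoc)
    hence "r * (1 - g) * r = - (r * h * r)" by (simp add: eq_neg_iff_add_eq_0)
    hence "- (r * (1 - g) * r) \<in> K" using SA3[OF rK hK] by simp
    hence "r * (1 - g) * r = 0" using Kanti SA3[OF rK gK] by blast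
    hence "(1 - g) * r = 0" using SA4[OF rA gK] by blast
    hence "g * r = r" by (simp add: algebra_simps)
    thus ?thesis using proj_mult_le[OF rP g] by blast
  qed
  have rp: "sa_le K r p" using lower[OF p _ fK] by (simp add: z_def)
  have rf: "sa_le K r f" using lower[OF f _ pK] by (simp add: z_def add.commute)
  have great: "sa_le K x r" if x: "x \<in> Proj A" "sa_le K x p" "sa_le K x f" for x
  proof -
    have "p * x = x" "f * x = x" using proj_le_mult x p f by blast+
    hence "z * x = 0" by (simp add: z_def algebra_simps mult_2)
    hence "e * x = 0" using ez ProjD[OF x(1)] by blast
    hence "r * x = x" by (simp add: r_def algebra_simps)
    thus ?thesis using proj_mult_le[OF x(1) rP] by blast
  qed
  have "pmeet A K p f = r" unfolding pmeet_def
  proof (rule the_equality)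
    show "r \<in> Proj A \<and> sa_le K r p \<and> sa_le K r f \<and> (\<forall>x\<in>Proj A. sa_le K x p \<and> sa_le K x f \<longrightarrow> sa_le K x r)"
      using rP rp rf great by blast
    fix r' assume r': "r' \<in> Proj A \<and> sa_le K r' p \<and> sa_le K r' f \<and> (\<forall>x\<in>Proj A. sa_le K x p \<and> sa_le K x f \<longrightarrow> sa_le K x r')"
    have 1: "r - r' \<in> K" using great r' by (simp add: sa_le_def)
    have 2: "r' - r \<in> K" using r' rP rp rf by (simp add: sa_le_def)
    have "r' - r = 0" using Kanti[OF 2] 1 by (simp add: minus_diff_eq)
    thus "r' = r" by (metis right_minus_eq)
  qed
  hence "r = 0" using m by simp
  hence "e = 1" by (simp add: r_def)
  thus ?thesis using ez y zy by (simp add: z_def)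
qed

end

context SA begin

lemma ker_a:
  assumes p: "p \<in> Proj A" and q: "q \<in> Proj A"
    and m1: "pmeet A K p (pcomp q) = 0" and m2: "pmeet A K (pcomp p) q = 0"
    and x: "x \<in> Proj A" and ax: "(p - pcomp q) * x = 0"
  shows "x = 0"
proof -
  have pA: "p \<in> A" "p * p = p" and qA: "q \<in> A" "q * q = q" and xA: "x \<in> A" "x * x = x"
    using p q x ProjD by auto
  have px: "p * x = x - q * x" using ax by (simp add: pcomp_def algebra_simps)
  have "q * (p * x) = q * (x - q * x)" by (simp only: px)
  also have "\<dots> = q * x - (q * q) * x" by (simp add: algebra_simps)
  also have "\<dots> = 0" using qA by simp
  finally have qpx: "q * (p * x) = 0" .
  define w where "w = p * x * p"
  have wA: "w \<in> A" using triple pA xA by (simp add: w_def)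
  have "((1 - p) + (1 - pcomp q)) * w = (p * x * p - p * p * x * p) + q * (p * x) * p"
    by (simp add: w_def pcomp_def algebra_simps)
  also have "\<dots> = 0" using pA qpx by (simp add: mult.assoc)
  finally have "w = 0" using meet_zero[OF p Proj_comp[OF q] _ wA] m1 by (simp add: pcomp_def)
  hence "p * x = 0" using SA4[OF pA(1) ProjK[OF x]] by (simp add: w_def)
  hence qx: "q * x = x" using px by simp
  have "((1 - pcomp p) + (1 - q)) * x = 0" using qx \<open>p * x = 0\<close> by (simp add: pcomp_def algebra_simps)
  thus "x = 0" using meet_zero[OF Proj_comp[OF p] q m2[unfolded pcomp_def] xA(1)] by (simp add: pcomp_def)
qed

lemma ker_b:
  assumes p: "p \<in> Proj A" and q: "q \<in> Proj A"
    and m1: "pmeet A K p q = 0" and m2: "pmeet A K (pcomp p) (pcomp q) = 0"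
    and x: "x \<in> Proj A" and bx: "(p - q) * x = 0"
  shows "x = 0"
proof -
  have pA: "p \<in> A" "p * p = p" and qA: "q \<in> A" "q * q = q" and xA: "x \<in> A" "x * x = x"
    using p q x ProjD by auto
  have px: "p * x = q * x" using bx by (simp add: algebra_simps)
  have qpx: "q * (p * x) = p * x" using px qA by (simp add: mult.assoc[symmetric])
  define w where "w = p * x * p"
  have wA: "w \<in> A" using triple pA xA by (simp add: w_def)
  have "((1 - p) + (1 - q)) * w = (p * x * p - p * p * x * p) + (p * x * p - q * (p * x) * p)"
    by (simp add: w_def algebra_simps mult_2)
  also have "\<dots> = 0" using pA qpx by (simp add: mult.assoc)
  finally have "w = 0" using meet_zero[OF p q m1 wA] by simp
  hence "p * x = 0" using SA4[OF pA(1) ProjK[OF x]] by (simp add: w_def)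
  hence qx: "q * x = 0" using px by simp
  have "((1 - pcomp p) + (1 - pcomp q)) * x = 0" using qx \<open>p * x = 0\<close> by (simp add: pcomp_def algebra_simps)
  thus "x = 0" using meet_zero[OF Proj_comp[OF p] Proj_comp[OF q] m2[unfolded pcomp_def] xA(1)] by (simp add: pcomp_def)
qed

lemma carrier_one:
  assumes a: "a \<in> A" and k: "\<And>x. x \<in> Proj A \<Longrightarrow> a * x = 0 \<Longrightarrow> x = 0"
  shows "carrier_proj A a = 1 \<and> (\<forall>y\<in>A. a * y = 0 \<longrightarrow> y = 0)"
proof -
  define e where "e = carrier_proj A a"
  have eP: "e \<in> Proj A" and ez: "\<forall>y\<in>A. a * y = 0 \<longleftrightarrow> e * y = 0"
    using carrier_props[OF a] by (auto simp: e_def)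
  have xP: "1 - e \<in> Proj A" using Proj_comp[OF eP] .
  have "e * (1 - e) = 0" using ProjD[OF eP] by (simp add: algebra_simps)
  hence "a * (1 - e) = 0" using ez ProjD[OF xP] by blast
  hence "1 - e = 0" using k[OF xP] by blast
  hence e1: "e = 1" by simp
  show ?thesis using e1 ez by (simp add: e_def)
qed

end

context SA begin

lemma cancel2: assumes "(x::'a) + x = y + y" shows "x = y"
proof -
  have "(2::real) *\<^sub>R x = 2 *\<^sub>R y" using assms by (simp only: scaleR_2)
  thus ?thesis by simp
qed

lemma carrier_comm:
  assumes dA: "d \<in> A" and gA: "g \<in> A" and dg: "d * g = g * d"
  shows "d * carrier_proj A g = carrier_proj A g * d"
proof -
  define e where "e = carrier_proj A g"
  have eP: "e \<in> Proj A" and ez: "\<forall>y\<in>A. g * y = 0 \<longleftrightarrow> e * y = 0"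
    using carrier_props[OF gA] by (auto simp: e_def)
  have eA: "e \<in> A" "e * e = e" using ProjD[OF eP] by auto
  define x where "x = 1 - e"
  have xA: "x \<in> A" using A1 Adiff eA by (simp add: x_def)
  have ex: "e * x = 0" "x * e = 0" using eA by (simp_all add: x_def algebra_simps)
  have gx: "g * x = 0" using ez ex xA by blast
  have ge: "g * e = g" using gx by (simp add: x_def algebra_simps)
  define w where "w = e * d * x + x * d * e"
  have "w = d - e * d * e - x * d * x" by (simp add: w_def x_def algebra_simps)
  hence wA: "w \<in> A" using triple[OF eA(1) dA] triple[OF xA dA] dA Adiff by simp
  have "g * w = (g * e) * d * x + (g * x) * d * e" by (simp add: w_def algebra_simps)
  also have "\<dots> = g * d * x" using ge gx by simp
  also have "\<dots> = d * (g * x)" using dg by (metis mult.assoc)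
  also have "\<dots> = 0" using gx by simp
  finally have "e * w = 0" using ez wA by blast
  moreover have "e * w = (e * e) * d * x + (e * x) * d * e" by (simp add: w_def algebra_simps)
  ultimately have edx: "e * d * x = 0" using eA ex by simp
  hence w2: "w = x * d * e" by (simp add: w_def)
  have "w * w = x * d * (e * x) * d * e" by (simp add: w2 mult.assoc)
  hence "w * w = 0" using ex by simp
  hence xde: "x * d * e = 0" using nil[OF wA] w2 by simp
  have "d * e = (e + x) * d * e" by (simp add: x_def)
  also have "\<dots> = e * d * e" using xde by (simp add: algebra_simps)
  also have "\<dots> = e * d * (e + x)" using edx by (simp add: algebra_simps)
  also have "\<dots> = e * d" by (simp add: x_def)
  finally show ?thesis by (simp add: e_def)
qed

lemma c_ker:
  assumes aA: "a \<in> A" and ker: "\<forall>y\<in>A. a * y = 0 \<longrightarrow> y = 0"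
    and cK: "c \<in> K" and cc: "c * c = a * a"
  shows "\<forall>y\<in>A. c * y = 0 \<longrightarrow> y = 0"
proof -
  have cA: "c \<in> A" using cK KA by auto
  have k: "x = 0" if x: "x \<in> Proj A" "c * x = 0" for x
  proof -
    have xA: "x \<in> A" using x ProjD by auto
    have "a * a * x = 0" using cc x(2) by (metis mult.assoc mult_zero_right)
    hence xaa: "x * (a * a) = 0" using transp[OF Asq'[OF aA] xA] by (simp add: mult.assoc)
    have "(a * x * a) * (a * x * a) = a * x * (a * a * x) * a" by (simp add: mult.assoc)
    also have "\<dots> = 0" using \<open>a * a * x = 0\<close> by simp
    finally have "a * x * a = 0" using nil triple[OF aA xA] by blast
    hence "a * x = 0" using SA4[OF aA ProjK[OF x(1)]] by blast
    thus "x = 0" using ker xA by blast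
  qed
  show ?thesis using carrier_one[OF cA k] by blast
qed

lemma polar_triv:
  assumes aA: "a \<in> A" and ker: "\<forall>y\<in>A. a * y = 0 \<longrightarrow> y = 0" and car: "carrier_proj A a = 1"
  shows "polar_sym A K a \<in> A \<and> polar_sym A K a * polar_sym A K a = 1
    \<and> polar_sym A K a \<in> CComm A a
    \<and> sa_abs K a * polar_sym A K a = a \<and> polar_sym A K a * sa_abs K a = a"
proof -
  define c where "c = sa_abs K a"
  have cprops: "c \<in> K" "c * c = a * a" "c \<in> CComm A (a * a)"
    using sqrt_props[OF Asq[OF aA]] by (auto simp: c_def sa_abs_def)
  have cA: "c \<in> A" using cprops KA by auto
  have ca: "c * a = a * c" using CComm_comm[OF cprops(3) aA] by (simp add: mult.assoc)
  have cker: "\<forall>y\<in>A. c * y = 0 \<longrightarrow> y = 0" using c_ker[OF aA ker cprops(1,2)] .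
  define g where "g = c + a"
  define h where "h = c - a"
  have gA: "g \<in> A" and hA: "h \<in> A" using cA aA Aadd Adiff by (auto simp: g_def h_def)
  have gh: "g * h = 0" "h * g = 0" using ca cprops(2) by (simp_all add: g_def h_def algebra_simps)
  define e where "e = carrier_proj A g"
  define f where "f = carrier_proj A h"
  have eP: "e \<in> Proj A" and ez: "\<forall>y\<in>A. g * y = 0 \<longleftrightarrow> e * y = 0"
    using carrier_props[OF gA] by (auto simp: e_def)
  have fP: "f \<in> Proj A" and fz: "\<forall>y\<in>A. h * y = 0 \<longleftrightarrow> f * y = 0"
    using carrier_props[OF hA] by (auto simp: f_def)
  have eA: "e \<in> A" "e * e = e" and fA: "f \<in> A" "f * f = f" using eP fP ProjD by auto
  have eh: "e * h = 0" using ez gh hA by blast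
  have he: "h * e = 0" using transp[OF eA(1) hA eh] .
  have fg: "f * g = 0" using fz gh gA by blast
  have gf: "g * f = 0" using transp[OF fA(1) gA fg] .
  have ef: "e * f = 0" using ez gf fA by blast
  have fe: "f * e = 0" using fz he eA by blast
  have "e * (1 - e) = 0" using eA by (simp add: algebra_simps)
  hence "g * (1 - e) = 0" using ez A1 Adiff eA by blast
  hence ge: "g * e = g" by (simp add: algebra_simps)
  have eg: "e * g = g" using transp[OF gA Adiff[OF A1 eA(1)] \<open>g * (1 - e) = 0\<close>] by (simp add: algebra_simps)
  have "f * (1 - f) = 0" using fA by (simp add: algebra_simps)
  hence "h * (1 - f) = 0" using fz A1 Adiff fA by blast
  hence hf: "h * f = h" by (simp add: algebra_simps)
  have fh: "f * h = h" using transp[OF hA Adiff[OF A1 fA(1)] \<open>h * (1 - f) = 0\<close>] by (simp add: algebra_simps)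
  define t where "t = e - f"
  have tA: "t \<in> A" using eA fA Adiff by (simp add: t_def)
  have g_h: "g - h = a + a" by (simp add: g_def h_def)
  have gph: "g + h = c + c" by (simp add: g_def h_def)
  define x where "x = 1 - e - f"
  have xA: "x \<in> A" using A1 eA fA Adiff by (simp add: x_def)
  have "(g - h) * x = (g - g * e - g * f) - (h - h * e - h * f)" by (simp add: x_def algebra_simps)
  also have "\<dots> = 0" using ge gf he hf by simp
  finally have "(g - h) * x = 0" .
  hence "(a + a) * x = 0" using g_h by simp
  hence "a * x + a * x = 0 + 0" by (simp add: algebra_simps)
  hence "a * x = 0" by (rule cancel2)
  hence "x = 0" using ker xA by blast
  hence e_f: "e + f = 1" by (simp add: x_def algebra_simps)
  have tt: "t * t = 1"
  proof -
    have "t * t = e * e - e * f - f * e + f * f" by (simp add: t_def algebra_simps)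
    also have "\<dots> = e + f" using eA fA ef fe by simp
    finally show ?thesis using e_f by simp
  qed
  have "(c + c) * t = (g + h) * t" using gph by simp
  also have "\<dots> = g * e - g * f + h * e - h * f" by (simp add: t_def algebra_simps)
  also have "\<dots> = a + a" using ge gf he hf g_h by simp
  finally have "(c + c) * t = a + a" .
  hence "c * t + c * t = a + a" by (simp add: algebra_simps)
  hence ct: "c * t = a" by (rule cancel2)
  have "t * (c + c) = t * (g + h)" using gph by simp
  also have "\<dots> = e * g + e * h - f * g - f * h" by (simp add: t_def algebra_simps)
  also have "\<dots> = a + a" using eg eh fg fh g_h by simp
  finally have "t * (c + c) = a + a" .
  hence "t * c + t * c = a + a" by (simp add: algebra_simps)
  hence tc: "t * c = a" by (rule cancel2)
  have tCC: "t \<in> CComm A a"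
  proof -
    have "t * d = d * t" if d: "d \<in> Comm A a" for d
    proof -
      have dA: "d \<in> A" and da: "a * d = d * a" using d by (auto simp: Comm_def)
      have "d * (a * a) = (a * a) * d" using da by (metis mult.assoc)
      hence "c * d = d * c" using CComm_comm[OF cprops(3) dA] by simp
      hence "d * g = g * d" "d * h = h * d" using da by (simp_all add: g_def h_def algebra_simps)
      hence "d * e = e * d" "d * f = f * d" using carrier_comm[OF dA gA] carrier_comm[OF dA hA]
        by (simp_all add: e_def f_def)
      thus ?thesis by (simp add: t_def algebra_simps)
    qed
    thus ?thesis using tA by (auto simp: CComm_def)
  qed
  have sig: "signum A K a = t" unfolding signum_def
  proof (rule the_equality)
    show "t \<in> A \<and> t * t = carrier_proj A a \<and> t \<in> CComm A a \<and> a = sa_abs K a * t \<and> a = t * sa_abs K a"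
      using tA tt car tCC ct tc by (simp add: c_def)
    fix t' assume t': "t' \<in> A \<and> t' * t' = carrier_proj A a \<and> t' \<in> CComm A a \<and> a = sa_abs K a * t' \<and> a = t' * sa_abs K a"
    have "c * (t' - t) = 0" using t' ct by (simp add: c_def algebra_simps)
    hence "t' - t = 0" using cker t' tA Adiff by blast
    thus "t' = t" by (metis right_minus_eq)
  qed
  have "polar_sym A K a = t" by (simp add: polar_sym_def sig car pcomp_def)
  thus ?thesis using tA tt tCC ct tc by (simp add: c_def)
qed

end

lemma alg:
  fixes c s u v :: "'a::ring_1"
  assumes uu: "u * u = 1" and vv: "v * v = 1" and vu: "v * u = - (u * v)"
    and uc: "u * c = c * u" and us: "u * s = s * u" and vc: "v * c = c * v" and vs: "v * s = s * v"
    and sc: "s * c = c * s" and ss: "s * s = 1 - c * c"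
  shows "(s*u - c*v) * (s*u - c*v) = 1"
    and "(s*u - c*v) * (c*u + s*v) = - ((c*u + s*v) * (s*u - c*v))"
    and "(s*u - c*v) * (c*u + s*v) * (s*u - c*v) = - (c*u + s*v)"
    and "u*v*(1 + c*u + s*v) + (1 + c*u + s*v)*v*u = (s*u - c*v) + (s*u - c*v)"
    and "(s*u - c*v) * s = s * (s*u - c*v)"
    and "(s*u - c*v) * c = c * (s*u - c*v)"
proof -
  have uu': "u * (u * z) = z" for z using uu by (metis mult.assoc mult_1_left)
  have vv': "v * (v * z) = z" for z using vv by (metis mult.assoc mult_1_left)
  have vu': "v * (u * z) = - (u * (v * z))" for z using vu by (metis mult.assoc minus_mult_left)
  have uc': "u * (c * z) = c * (u * z)" for z using uc by (metis mult.assoc)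
  have us': "u * (s * z) = s * (u * z)" for z using us by (metis mult.assoc)
  have vc': "v * (c * z) = c * (v * z)" for z using vc by (metis mult.assoc)
  have vs': "v * (s * z) = s * (v * z)" for z using vs by (metis mult.assoc)
  have sc': "s * (c * z) = c * (s * z)" for z using sc by (metis mult.assoc)
  have ss': "s * (s * z) = z - c * (c * z)" for z using ss by (metis mult.assoc mult_1_left left_diff_distrib)
  note R = uu uu' vv vv' vu vu' uc uc' us us' vc vc' vs vs' sc sc' ss ss'
  show "(s*u - c*v) * (s*u - c*v) = 1" by (simp add: algebra_simps R)
  show "(s*u - c*v) * (c*u + s*v) = - ((c*u + s*v) * (s*u - c*v))" by (simp add: algebra_simps R)
  show "(s*u - c*v) * (c*u + s*v) * (s*u - c*v) = - (c*u + s*v)" by (simp add: algebra_simps R)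
  show "u*v*(1 + c*u + s*v) + (1 + c*u + s*v)*v*u = (s*u - c*v) + (s*u - c*v)" by (simp add: algebra_simps R)
  show "(s*u - c*v) * s = s * (s*u - c*v)" by (simp add: algebra_simps R)
  show "(s*u - c*v) * c = c * (s*u - c*v)" by (simp add: algebra_simps R)
qed

theorem theorem7p5:
  fixes A K :: "'a::real_algebra_1 set" and p q :: 'a
  assumes SA: "synaptic_algebra A K"
    and pP: "p \<in> Proj A" and qP: "q \<in> Proj A"
    and gen: "generic_position A K p q"
  defines "c \<equiv> sa_sqrt K (p * q * p + pcomp p * pcomp q * pcomp p)"
    and "s \<equiv> sa_sqrt K (p * pcomp q * p + pcomp p * q * pcomp p)"
    and "u \<equiv> polar_sym A K (p - pcomp q)"
    and "v \<equiv> polar_sym A K (p - q)"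
    and "j \<equiv> polar_sym A K (p - pcomp q) * polar_sym A K (p - q) * p + p * polar_sym A K (p - q) * polar_sym A K (p - pcomp q)"
    and "l \<equiv> 2 * p - 1"
  shows "(symmetry A j \<and> j * p * j = pcomp p)
    \<and> (j * s = s * j \<and> j * c = c * j)
    \<and> (j = p * j + j * p)
    \<and> (l = p - pcomp p \<and> l = c * u + s * v \<and> symmetry A l
         \<and> l * p = p * l \<and> l * c = c * l \<and> l * s = s * l)"
proof -
  interpret SA A K by (unfold_locales) (rule SA)
  have pA: "p \<in> A" "p * p = p" and qA: "q \<in> A" "q * q = q" using pP qP ProjD by auto
  have m: "pmeet A K p q = 0" "pmeet A K p (pcomp q) = 0" "pmeet A K (pcomp p) q = 0"
      "pmeet A K (pcomp p) (pcomp q) = 0" using gen by (auto simp: generic_position_def)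
  define a where "a = p - pcomp q"
  define b where "b = p - q"
  have aA: "a \<in> A" and bA: "b \<in> A" using pA qA A1 Adiff by (simp_all add: a_def b_def pcomp_def)
  have ca1: "carrier_proj A a = 1 \<and> (\<forall>y\<in>A. a * y = 0 \<longrightarrow> y = 0)"
    using carrier_one[OF aA] ker_a[OF pP qP m(2) m(3)] by (simp add: a_def)
  have cb1: "carrier_proj A b = 1 \<and> (\<forall>y\<in>A. b * y = 0 \<longrightarrow> y = 0)"
    using carrier_one[OF bA] ker_b[OF pP qP m(1) m(4)] by (simp add: b_def)
  have aa: "a * a = p * q * p + pcomp p * pcomp q * pcomp p"
    using pA qA by (simp add: a_def pcomp_def algebra_simps)
  have bb: "b * b = p * pcomp q * p + pcomp p * q * pcomp p"
    using pA qA by (simp add: b_def pcomp_def algebra_simps)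
  have cdef: "c = sa_abs K a" by (simp add: c_def sa_abs_def aa)
  have sdef: "s = sa_abs K b" by (simp add: s_def sa_abs_def bb)
  have cprops: "c \<in> K" "c * c = a * a" "c \<in> CComm A (a * a)"
    using sqrt_props[OF Asq[OF aA]] by (auto simp: cdef sa_abs_def)
  have sprops: "s \<in> K" "s * s = b * b" "s \<in> CComm A (b * b)"
    using sqrt_props[OF Asq[OF bA]] by (auto simp: sdef sa_abs_def)
  have cA: "c \<in> A" and sA: "s \<in> A" using cprops sprops KA by auto
  have uprops: "u \<in> A" "u * u = 1" "u \<in> CComm A a" "c * u = a" "u * c = a"
    using polar_triv[OF aA conjunct2[OF ca1] conjunct1[OF ca1]] by (simp_all add: u_def a_def cdef)
  have vprops: "v \<in> A" "v * v = 1" "v \<in> CComm A b" "s * v = b" "v * s = b"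
    using polar_triv[OF bA conjunct2[OF cb1] conjunct1[OF cb1]] by (simp_all add: v_def b_def sdef)
  have jdef: "j = u * v * p + p * v * u" by (simp add: j_def u_def v_def)
  have ab: "a * b = - (b * a)" using pA qA by (simp add: a_def b_def pcomp_def algebra_simps)
  have aabb: "a * a + b * b = 1" using pA qA by (simp add: a_def b_def pcomp_def algebra_simps)
  have abl: "a + b = l" by (simp add: a_def b_def pcomp_def l_def mult_2)
  have a_comm_bb: "a * (b * b) = (b * b) * a"
  proof -
    have "a * (b * b) = (a * b) * b" by (simp add: mult.assoc)
    also have "\<dots> = - (b * (a * b))" using ab by (simp add: mult.assoc)
    also have "\<dots> = b * (b * a)" using ab by simp
    finally show ?thesis by (simp add: mult.assoc)
  qed
  have b_comm_aa: "b * (a * a) = (a * a) * b"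
  proof -
    have "b * (a * a) = (b * a) * a" by (simp add: mult.assoc)
    also have "\<dots> = - (a * b) * a" using ab by simp
    also have "\<dots> = - (a * (b * a))" by (simp add: mult.assoc)
    also have "\<dots> = a * (a * b)" using ab by simp
    finally show ?thesis by (simp add: mult.assoc)
  qed
  have sa: "s * a = a * s" using CComm_comm[OF sprops(3) aA] a_comm_bb by simp
  have cb: "c * b = b * c" using CComm_comm[OF cprops(3) bA] b_comm_aa by simp
  have ca: "c * a = a * c" using CComm_comm[OF cprops(3) aA] by (simp add: mult.assoc)
  have sb: "s * b = b * s" using CComm_comm[OF sprops(3) bA] by (simp add: mult.assoc)
  have "s * (a * a) = (a * a) * s"
  proof -
    have "s * (b * b) = (b * b) * s" using sprops(2) by (metis mult.assoc)
    moreover have "a * a = 1 - b * b" using aabb by (simp add: algebra_simps)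
    moreover have aa1: "a * a = 1 - b * b" using aabb by (simp add: algebra_simps)
    ultimately have sbb: "s * (b * b) = (b * b) * s" by simp
    have "s * (a * a) = s * (1 - b * b)" using aa1 by simp
    also have "\<dots> = s - s * (b * b)" by (simp add: right_diff_distrib)
    also have "\<dots> = s - (b * b) * s" using sbb by simp
    also have "\<dots> = (1 - b * b) * s" by (simp add: left_diff_distrib)
    also have "\<dots> = (a * a) * s" using aa1 by simp
    finally show ?thesis .
  qed
  hence cs: "c * s = s * c" using CComm_comm[OF cprops(3) sA] by simp
  have us: "u * s = s * u" using CComm_comm[OF uprops(3) sA] sa by simp
  have vc: "v * c = c * v" using CComm_comm[OF vprops(3) cA] cb by simp
  have uc: "u * c = c * u" using uprops by simp
  have vs: "v * s = s * v" using vprops by simp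
  have cker: "\<forall>y\<in>A. c * y = 0 \<longrightarrow> y = 0" using c_ker[OF aA conjunct2[OF ca1] cprops(1,2)] .
  have sker: "\<forall>y\<in>A. s * y = 0 \<longrightarrow> y = 0" using c_ker[OF bA conjunct2[OF cb1] sprops(1,2)] .
  have uv: "v * u = - (u * v)"
  proof -
    define y where "y = u * v + v * u"
    have yA: "y \<in> A" using jordan uprops vprops by (simp add: y_def)
    have e1: "s * (u * v) = u * (v * s)" by (metis mult.assoc us vs)
    have e2: "s * (v * u) = v * (u * s)" by (metis mult.assoc us vs)
    have sy: "s * y = y * s" using e1 e2 by (simp add: y_def algebra_simps)
    have syA: "s * y \<in> A" using Acomm[OF sA yA sy] .
    have "a * b = c * s * (u * v)" using uprops(4) vprops(4) us by (metis mult.assoc)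
    moreover have "b * a = c * s * (v * u)" using uprops(4) vprops(4) vc cs by (metis mult.assoc)
    ultimately have "c * (s * y) = a * b + b * a" by (simp add: y_def algebra_simps)
    hence "c * (s * y) = 0" using ab by simp
    hence "s * y = 0" using cker syA by blast
    hence "y = 0" using sker yA by blast
    thus ?thesis by (simp add: y_def eq_neg_iff_add_eq_0 add.commute)
  qed
  have ss: "s * s = 1 - c * c" using sprops(2) cprops(2) aabb by (simp add: algebra_simps)
  have sc: "s * c = c * s" using cs by simp
  note AL = alg[OF uprops(2) vprops(2) uv uc us vc vs sc ss]
  define L where "L = c * u + s * v"
  have lL: "l = L" using abl uprops(4) vprops(4) by (simp add: L_def)
  have "p + p - 1 = L" using lL by (simp add: l_def mult_2)
  hence pp: "p + p = 1 + L" by (metis add.commute diff_add_cancel)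
  have jj2: "j + j = (s*u - c*v) + (s*u - c*v)"
  proof -
    have "j + j = u * v * (p + p) + (p + p) * v * u" by (simp add: jdef algebra_simps)
    also have "\<dots> = u*v*(1 + c*u + s*v) + (1 + c*u + s*v)*v*u" by (simp add: pp L_def add.assoc)
    also have "\<dots> = (s*u - c*v) + (s*u - c*v)" by (rule AL(4))
    finally show ?thesis .
  qed
  have jJ: "j = s*u - c*v" using cancel2[OF jj2] .
  have suA: "s * u \<in> A" using Acomm[OF sA uprops(1)] us by simp
  have cvA: "c * v \<in> A" using Acomm[OF cA vprops(1)] vc by simp
  have jA: "j \<in> A" using Adiff[OF suA cvA] jJ by simp
  have j1: "j * j = 1" using AL(1) jJ by simp
  have jLj: "j * L * j = - L" using AL(3) jJ by (simp add: L_def)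
  have jL: "j * L = - (L * j)" using AL(2) jJ by (simp add: L_def)
  have g1: "j * p * j = pcomp p"
  proof -
    have "j * p * j + j * p * j = j * (p + p) * j" by (simp add: algebra_simps)
    also have "\<dots> = j * j + j * L * j" by (simp add: pp algebra_simps)
    also have "\<dots> = 1 - L" using j1 jLj by simp
    also have "\<dots> = (1 - p) + (1 - p)" using pp by (simp add: algebra_simps)
    finally have "j * p * j + j * p * j = (1 - p) + (1 - p)" .
    hence "j * p * j = 1 - p" by (rule cancel2)
    thus ?thesis by (simp add: pcomp_def)
  qed
  have g2: "j * s = s * j" "j * c = c * j" using AL(5,6) jJ by simp_all
  have g3: "j = p * j + j * p"
  proof -
    have "(p * j + j * p) + (p * j + j * p) = (p + p) * j + j * (p + p)" by (simp add: algebra_simps)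
    also have "\<dots> = (j + j) + (L * j + j * L)" by (simp add: pp algebra_simps)
    also have "\<dots> = j + j" using jL by simp
    finally have "(p * j + j * p) + (p * j + j * p) = j + j" .
    hence "p * j + j * p = j" by (rule cancel2)
    thus ?thesis by simp
  qed
  have lA: "l \<in> A" using Aadd[OF aA bA] abl by simp
  have g4: "l = p - pcomp p" by (simp add: l_def pcomp_def mult_2)
  have g5: "l = c * u + s * v" using lL by (simp add: L_def)
  have g6: "l * l = 1" using pA by (simp add: l_def mult_2 algebra_simps)
  have g7: "l * p = p * l" using pA by (simp add: l_def mult_2 algebra_simps)
  have g8: "l * c = c * l" using ca cb abl[symmetric] by (simp add: algebra_simps)
  have g9: "l * s = s * l" using sa sb abl[symmetric] by (simp add: algebra_simps)
  show ?thesis using jA j1 g1 g2 g3 g4 g5 lA g6 g7 g8 g9 by (simp add: symmetry_def)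
qed

end
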